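(* Let $T$ be a tree with $n$ vertices. Then \[ \mathcal{V}_2^*(T^\ell,n-1)=\big\{E(P_{u,v})\cup\{ww\mid w\notin V(P_{u,v})\}\;\big|\; u\neq v \text{ are leaves of } T\big\}, \] where $P_{u,v}$ is the unique path in $T$ joining $u$ and $v$.
   Context: A $2$-matching of a graph (loops allowed) is a set $\mathcal{M}$ of edges such that every vertex is incident to at most two edges of $\mathcal{M}$ (a loop counts twice for incidence but as one edge). $T^\ell$ is $T$ with a loop $ww$ added at each vertex $w$; $\ell(\mathcal{M})$ is the set of loops in $\mathcal{M}$. A $2$-matching $\mathcal{M}$ of $T^\ell$ is minimal if there is no $2$-matching $\mathcal{M}'$ of $T^\ell$ with $|\mathcal{M}'|=|\mathcal{M}|$ and $\ell(\mathcal{M}')\subsetneq\ell(\mathcal{M})$; $\mathcal{V}_2^*(T^\ell,j)$ is the set of minimal $2$-matchings of $T^\ell$ with exactly $j$ edges. *)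

theory Defs
  imports Main
begin

text \<open>Undirected graphs on a vertex set V; an ordinary edge is a 2-element set {u,v},
  a loop at w is represented by the singleton {w}.\<close>

definition is_path :: "'a set set \<Rightarrow> 'a list \<Rightarrow> bool" where
  "is_path E p \<longleftrightarrow> p \<noteq> [] \<and> distinct p \<and>
     (\<forall>i. Suc i < length p \<longrightarrow> {p ! i, p ! Suc i} \<in> E)"

definition graph_connected :: "'a set \<Rightarrow> 'a set set \<Rightarrow> bool" where
  "graph_connected V E \<longleftrightarrow>
     (\<forall>u\<in>V. \<forall>v\<in>V. \<exists>p. is_path E p \<and> hd p = u \<and> last p = v)"

definition acyclic_graph :: "'a set set \<Rightarrow> bool" where
  "acyclic_graph E \<longleftrightarrow> \<not> (\<exists>p. length p \<ge> 3 \<and> is_path E p \<and> {last p, hd p} \<in> E)"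

definition is_tree :: "'a set \<Rightarrow> 'a set set \<Rightarrow> bool" where
  "is_tree V E \<longleftrightarrow> finite V \<and> V \<noteq> {} \<and>
     E \<subseteq> {{u, v} | u v. u \<in> V \<and> v \<in> V \<and> u \<noteq> v} \<and>
     graph_connected V E \<and> acyclic_graph E"

definition is_leaf :: "'a set \<Rightarrow> 'a set set \<Rightarrow> 'a \<Rightarrow> bool" where
  "is_leaf V E v \<longleftrightarrow> v \<in> V \<and> card {e \<in> E. v \<in> e} = 1"

definition path_edges :: "'a list \<Rightarrow> 'a set set" where
  "path_edges p = {{p ! i, p ! Suc i} | i. Suc i < length p}"

definition loop_edges :: "'a set \<Rightarrow> 'a set set \<Rightarrow> 'a set set" where
  "loop_edges V E = E \<union> (\<lambda>w. {w}) ` V"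

definition loops_of :: "'a set set \<Rightarrow> 'a set set" where
  "loops_of M = {e \<in> M. card e = 1}"

definition mdeg :: "'a set set \<Rightarrow> 'a \<Rightarrow> nat" where
  "mdeg M w = card {e \<in> M. w \<in> e \<and> card e = 2} + (if {w} \<in> M then 2 else 0)"

definition two_matching :: "'a set \<Rightarrow> 'a set set \<Rightarrow> 'a set set \<Rightarrow> bool" where
  "two_matching V E M \<longleftrightarrow> M \<subseteq> loop_edges V E \<and> (\<forall>w\<in>V. mdeg M w \<le> 2)"

definition min_two_matchings :: "'a set \<Rightarrow> 'a set set \<Rightarrow> nat \<Rightarrow> 'a set set set" where
  "min_two_matchings V E j = {M. two_matching V E M \<and> card M = j \<and>
     \<not> (\<exists>M'. two_matching V E M' \<and> card M' = card M \<and> loops_of M' \<subset> loops_of M)}"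

end

theory Submission
  imports Defs
begin

lemma is_path_rev: "is_path E p \<Longrightarrow> is_path E (rev p)"
  unfolding is_path_def
proof (intro conjI allI impI)
  fix i assume h: "p \<noteq> [] \<and> distinct p \<and> (\<forall>i. Suc i < length p \<longrightarrow> {p ! i, p ! Suc i} \<in> E)"
    and i: "Suc i < length (rev p)"
  then have "Suc (length p - Suc (Suc i)) < length p" by simp
  with h have "{p ! (length p - Suc (Suc i)), p ! Suc (length p - Suc (Suc i))} \<in> E" by blast
  moreover have "Suc (length p - Suc (Suc i)) = length p - Suc i" using i by simp
  ultimately show "{rev p ! i, rev p ! Suc i} \<in> E" using i
    by (simp add: rev_nth insert_commute)
qed auto

lemma path_edges_rev: "path_edges (rev p) = path_edges p"
proof -
  have "path_edges (rev p) \<subseteq> path_edges p" for p :: "'a list"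
  proof
    fix e assume "e \<in> path_edges (rev p)"
    then obtain i where i: "Suc i < length p" "e = {rev p ! i, rev p ! Suc i}"
      unfolding path_edges_def by auto
    define j where "j = length p - Suc (Suc i)"
    have "Suc j < length p" "Suc j = length p - Suc i" using i by (auto simp: j_def)
    then have "e = {p ! j, p ! Suc j}" using i by (simp add: rev_nth insert_commute j_def)
    then show "e \<in> path_edges p" using \<open>Suc j < length p\<close> unfolding path_edges_def by blast
  qed
  from this[of p] this[of "rev p"] show ?thesis by auto
qed

lemma path_edges_sub: "is_path E p \<Longrightarrow> path_edges p \<subseteq> E"
  unfolding is_path_def path_edges_def by auto

lemma path_edges_card2: "distinct p \<Longrightarrow> e \<in> path_edges p \<Longrightarrow> card e = 2"
  unfolding path_edges_def by (auto simp: nth_eq_iff_index_eq)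

lemma path_edges_mem: "distinct p \<Longrightarrow> e \<in> path_edges p \<Longrightarrow> w \<in> e \<Longrightarrow>
   \<exists>k. w = p ! k \<and> k < length p"
  unfolding path_edges_def by auto

lemma card_path_edges: assumes "distinct p" shows "card (path_edges p) = length p - 1"
proof -
  have "path_edges p = (\<lambda>i. {p ! i, p ! Suc i}) ` {i. Suc i < length p}"
    unfolding path_edges_def by auto
  moreover have "inj_on (\<lambda>i. {p ! i, p ! Suc i}) {i. Suc i < length p}"
  proof (rule inj_onI)
    fix i j assume ij: "i \<in> {i. Suc i < length p}" "j \<in> {i. Suc i < length p}"
      "{p ! i, p ! Suc i} = {p ! j, p ! Suc j}"
    then have "p ! i = p ! j \<or> p ! i = p ! Suc j" by auto
    moreover have "p ! Suc i = p ! j \<or> p ! Suc i = p ! Suc j" using ij by auto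
    ultimately show "i = j" using ij assms by (auto simp: nth_eq_iff_index_eq)
  qed
  moreover have "{i. Suc i < length p} = {..<length p - 1}" by auto
  ultimately show ?thesis by (simp add: card_image)
qed

lemma path_set_sub:
  assumes "is_path E p" "length p \<ge> 2" shows "set p \<subseteq> \<Union>E"
proof
  fix x assume "x \<in> set p"
  then obtain k where k: "k < length p" "x = p ! k" by (auto simp: in_set_conv_nth)
  show "x \<in> \<Union>E"
  proof (cases "Suc k < length p")
    case True
    then show ?thesis using assms k unfolding is_path_def by blast
  next
    case False
    then have "Suc (k - 1) < length p" "Suc (k-1) = k" using assms k by auto
    then show ?thesis using assms k unfolding is_path_def by (metis UnionI insertCI)
  qed
qed

lemma path_length_bound:
  assumes "is_path E p" "length p \<ge> 2" "finite (\<Union>E)" shows "length p \<le> card (\<Union>E)"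
proof -
  have "length p = card (set p)" using assms by (simp add: is_path_def distinct_card)
  also have "\<dots> \<le> card (\<Union>E)" using path_set_sub[OF assms(1,2)] assms(3) by (rule card_mono[rotated])
  finally show ?thesis .
qed

lemma is_path_mono: "is_path F p \<Longrightarrow> F \<subseteq> E \<Longrightarrow> is_path E p"
  unfolding is_path_def by blast

lemma acyclic_mono: assumes "acyclic_graph E" "F \<subseteq> E" shows "acyclic_graph F"
proof -
  have "\<not> (length p \<ge> 3 \<and> is_path F p \<and> {last p, hd p} \<in> F)" for p
    using assms is_path_mono[of F p E] unfolding acyclic_graph_def by auto
  then show ?thesis unfolding acyclic_graph_def by blast
qed

lemma chord:
  assumes "acyclic_graph E" "is_path E p" "2 \<le> j" "j < length p" "{hd p, p ! j} \<in> E"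
  shows False
proof -
  let ?c = "take (Suc j) p"
  have "is_path E ?c" using assms(2,4) unfolding is_path_def by auto
  moreover have "length ?c \<ge> 3" using assms by auto
  moreover have "last ?c = p ! j" using assms by (simp add: take_Suc_conv_app_nth)
  moreover have "hd ?c = hd p" using assms by (cases p) auto
  ultimately have "length ?c \<ge> 3 \<and> is_path E ?c \<and> {last ?c, hd ?c} \<in> E"
    using assms(5) by (simp add: insert_commute)
  then show False using assms(1) unfolding acyclic_graph_def by blast
qed

lemma longest_path_exists:
  assumes "is_path F p0" "length p0 \<ge> 2" "finite (\<Union>F)"
  shows "\<exists>p. is_path F p \<and> length p \<ge> 2 \<and> (\<forall>q. is_path F q \<and> length q \<ge> 2 \<longrightarrow> length q \<le> length p)"
proof -
  let ?P = "\<lambda>l. \<exists>p. is_path F p \<and> length p \<ge> 2 \<and> length p = l"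
  have h1: "?P (length p0)" using assms by blast
  have h2: "\<forall>y. ?P y \<longrightarrow> y \<le> card (\<Union>F)" using path_length_bound[OF _ _ assms(3)] by auto
  have "\<exists>x. ?P x \<and> (\<forall>y. ?P y \<longrightarrow> y \<le> x)" by (rule Nat.ex_has_greatest_nat[OF h1 h2])
  then obtain x p where "is_path F p" "length p \<ge> 2" "length p = x" "\<forall>y. ?P y \<longrightarrow> y \<le> x" by blast
  then show ?thesis by blast
qed


lemma is_path_Cons:
  assumes "p \<noteq> []"
  shows "is_path E (x # p) \<longleftrightarrow> (x \<notin> set p \<and> {x, hd p} \<in> E \<and> is_path E p)"
proof
  assume h: "is_path E (x # p)"
  then have h2: "\<forall>i. Suc i < Suc (length p) \<longrightarrow> {(x#p) ! i, (x#p) ! Suc i} \<in> E"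
    unfolding is_path_def by simp
  have "{x, hd p} \<in> E" using h2[rule_format, of 0] assms by (simp add: hd_conv_nth)
  moreover have "is_path E p" unfolding is_path_def
  proof (intro conjI allI impI)
    fix i assume "Suc i < length p"
    then show "{p ! i, p ! Suc i} \<in> E" using h2[rule_format, of "Suc i"] by simp
  qed (use h assms in \<open>auto simp: is_path_def\<close>)
  ultimately show "x \<notin> set p \<and> {x, hd p} \<in> E \<and> is_path E p" using h
    unfolding is_path_def by simp
next
  assume h: "x \<notin> set p \<and> {x, hd p} \<in> E \<and> is_path E p"
  show "is_path E (x # p)" unfolding is_path_def
  proof (intro conjI allI impI)
    fix i assume i: "Suc i < length (x # p)"
    show "{(x # p) ! i, (x # p) ! Suc i} \<in> E"
    proof (cases i)
      case 0 then show ?thesis using h assms by (simp add: hd_conv_nth)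
    next
      case (Suc j) then show ?thesis using h i unfolding is_path_def by simp
    qed
  qed (use h in \<open>auto simp: is_path_def\<close>)
qed

lemma longest_end:
  assumes "acyclic_graph F" "\<forall>e\<in>F. card e = 2" "is_path F p" "length p \<ge> 2"
   "\<forall>q. is_path F q \<and> length q \<ge> 2 \<longrightarrow> length q \<le> length p" "e \<in> F" "hd p \<in> e"
  shows "e = {p!0, p!1}"
proof -
  obtain a b where ab: "e = {a,b}" "a \<noteq> b" using assms(2,6) by (meson card_2_iff)
  obtain x where x: "e = {hd p, x}" "x \<noteq> hd p" using ab assms(7) by auto
  have hd0: "hd p = p ! 0" using assms(4) by (cases p) auto
  show ?thesis
  proof (cases "x \<in> set p")
    case True
    then obtain j where j: "j < length p" "x = p ! j" by (auto simp: in_set_conv_nth)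
    have "j \<noteq> 0" using j x hd0 by (cases j) auto
    moreover have "\<not> 2 \<le> j" using chord[OF assms(1,3), of j] j x assms(6) by auto
    ultimately have "j = 1" by auto
    then show ?thesis using x j hd0 by simp
  next
    case False
    have "p \<noteq> []" using assms(4) by auto
    then have "is_path F (x # p)" using is_path_Cons[of p F x] False assms(3,6) x
      by (auto simp: insert_commute)
    then have "length (x # p) \<le> length p" using assms(5,4) by auto
    then show ?thesis by simp
  qed
qed

lemma finite_Union_card2: assumes "finite F" "\<forall>e\<in>F. card e = 2" shows "finite (\<Union>F)"
proof (rule finite_Union)
  show "finite F" by fact
  fix e assume "e \<in> F"
  then have "card e = 2" using assms by blast
  show "finite e"
  proof (rule ccontr)
    assume "\<not> finite e"
    then have "card e = 0" by (rule card.infinite)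
    with \<open>card e = 2\<close> show False by simp
  qed
qed

lemma forest_bound:
  assumes "finite F" "\<forall>e\<in>F. card e = 2" "acyclic_graph F" "F \<noteq> {}"
  shows "card F + 1 \<le> card (\<Union>F)"
  using assms
proof (induction "card F" arbitrary: F rule: less_induct)
  case less
  have finU: "finite (\<Union>F)" using finite_Union_card2 less.prems by blast
  obtain e where e: "e \<in> F" using less.prems by blast
  obtain a b where ab: "e = {a,b}" "a \<noteq> b" using less.prems e by (meson card_2_iff)
  have "is_path F [a,b]" using ab e unfolding is_path_def by (auto simp: less_Suc_eq)
  then obtain p where p: "is_path F p" "length p \<ge> 2"
     "\<forall>q. is_path F q \<and> length q \<ge> 2 \<longrightarrow> length q \<le> length p"
    using longest_path_exists[OF _ _ finU, of "[a,b]"] by auto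
  define e0 where "e0 = {p!0, p!1}"
  have e0F: "e0 \<in> F" using p unfolding is_path_def e0_def by auto
  have uniq: "\<forall>e\<in>F. hd p \<in> e \<longrightarrow> e = e0"
    using longest_end[OF less.prems(3,2) p] e0_def by blast
  have hdp: "hd p \<in> e0" using p(2) by (cases p) (auto simp: e0_def)
  define F' where "F' = F - {e0}"
  have U': "\<Union>F' \<subseteq> \<Union>F - {hd p}" using uniq unfolding F'_def by blast
  have hdU: "hd p \<in> \<Union>F" using hdp e0F by blast
  have cF: "card F = card F' + 1" using card_Suc_Diff1[OF less.prems(1) e0F] unfolding F'_def by simp
  show ?case
  proof (cases "F' = {}")
    case True
    then have "F = {e0}" using e0F unfolding F'_def by blast
    then show ?thesis using less.prems(2) by simp
  next
    case False
    have "card F' + 1 \<le> card (\<Union>F')"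
      apply (rule less.hyps)
      using cF less.prems False acyclic_mono[of F F'] unfolding F'_def by auto
    also have "\<dots> \<le> card (\<Union>F - {hd p})" using U' finU by (simp add: card_mono)
    also have "\<dots> = card (\<Union>F) - 1" using hdU finU by simp
    finally have "card F' + 1 \<le> card (\<Union>F) - 1" .
    moreover have "card (\<Union>F) > 0" using hdU finU card_gt_0_iff by blast
    ultimately show ?thesis using cF by linarith
  qed
qed

lemma path_unique_aux:
  assumes "acyclic_graph E" "is_path E (a#p')" "is_path E (a#q')" "p' \<noteq> []" "q' \<noteq> []"
    "last p' = last q'" "hd p' \<noteq> hd q'"
  shows False
  using assms(2-7)
proof (induction q' arbitrary: a p')
  case Nil then show ?case by simp
next
  case (Cons c q'')
  have ac: "{a, c} \<in> E" using Cons.prems(2) is_path_Cons[of "c#q''" E a] by simp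
  show ?case
  proof (cases "c \<in> set p'")
    case True
    then obtain i where i: "i < length p'" "c = p' ! i" by (auto simp: in_set_conv_nth)
    have "i \<noteq> 0" using i Cons.prems(3,6) by (cases p'; cases i) auto
    then show False using chord[OF assms(1) Cons.prems(1), of "Suc i"] i ac by auto
  next
    case False
    have ca: "c \<noteq> a" using Cons.prems(2) unfolding is_path_def by auto
    have q'': "q'' \<noteq> []"
    proof
      assume "q'' = []"
      then have "c = last p'" using Cons.prems(5) by simp
      then show False using False Cons.prems(3) by simp
    qed
    have P1: "is_path E (c # (a # p'))" using is_path_Cons[of "a#p'" E c] Cons.prems(1) False ca ac
      by (auto simp: insert_commute)
    have P2: "is_path E (c # q'')" using is_path_Cons[of "c#q''" E a] Cons.prems(2) by simp
    have "a \<noteq> hd q''" using Cons.prems(2) q'' unfolding is_path_def by (cases q'') auto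
    then show False using Cons.IH[OF P1 P2 _ q''] Cons.prems(3,5) q'' by simp
  qed
qed

lemma distinct_hd_last: "distinct q \<Longrightarrow> q \<noteq> [] \<Longrightarrow> hd q = last q \<Longrightarrow> length q = 1"
  by (cases q) (auto split: if_splits)

lemma path_unique:
  assumes "acyclic_graph E" "is_path E p" "is_path E q" "hd p = hd q" "last p = last q"
  shows "p = q"
  using assms(2-5)
proof (induction p arbitrary: q)
  case Nil then show ?case by (simp add: is_path_def)
next
  case (Cons a p')
  obtain q' where q: "q = a # q'" using Cons.prems unfolding is_path_def by (cases q) auto
  show ?case
  proof (cases "p' = [] \<or> q' = []")
    case True
    show ?thesis
    proof (cases "p' = []")
      case pn: True
      then have "last q = hd q" using Cons.prems q by simp
      then have "length q = 1" using distinct_hd_last[of q] Cons.prems(2) q unfolding is_path_def by simp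
      then show ?thesis using q pn by simp
    next
      case pn: False
      then have qn: "q' = []" using True by simp
      then have "last (a#p') = hd (a#p')" using Cons.prems q by simp
      then have "length (a#p') = 1" using distinct_hd_last[of "a#p'"] Cons.prems(1) unfolding is_path_def by simp
      then show ?thesis using pn by simp
    qed
  next
    case False
    have P1: "is_path E p'" using is_path_Cons[of p' E a] Cons.prems(1) False by simp
    have P2: "is_path E q'" using is_path_Cons[of q' E a] Cons.prems(2) q False by simp
    show ?thesis
    proof (cases "hd p' = hd q'")
      case True
      then show ?thesis using Cons.IH[OF P1 P2] Cons.prems q False by simp
    next
      case hne: False
      show ?thesis using path_unique_aux[OF assms(1) Cons.prems(1), of q'] Cons.prems q False hne by simp
    qed
  qed
qed

lemma leaf_end:
  assumes "is_leaf V E u" "is_path E q" "u \<in> set q"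
  shows "u = hd q \<or> u = last q"
proof (rule ccontr)
  assume nc: "\<not> (u = hd q \<or> u = last q)"
  obtain k where k: "k < length q" "u = q ! k" using assms(3) by (auto simp: in_set_conv_nth)
  have q: "q \<noteq> []" "distinct q" using assms(2) unfolding is_path_def by auto
  have "k \<noteq> 0" using nc k q by (cases q; cases k) auto
  moreover have "k \<noteq> length q - 1"
  proof
    assume "k = length q - 1"
    then have "u = last q" using k q by (simp add: last_conv_nth)
    with nc show False by simp
  qed
  ultimately have kk: "0 < k" "Suc k < length q" using k by linarith+
  define e1 where "e1 = {q ! (k-1), q ! k}"
  define e2 where "e2 = {q ! k, q ! Suc k}"
  have "Suc (k-1) < length q" "Suc (k-1) = k" using kk by auto
  moreover have "\<forall>i. Suc i < length q \<longrightarrow> {q ! i, q ! Suc i} \<in> E" using assms(2) unfolding is_path_def by blast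
  ultimately have "{q ! (k-1), q ! Suc (k-1)} \<in> E" by blast
  then have "e1 \<in> E" using \<open>Suc (k-1) = k\<close> unfolding e1_def by simp
  have "e2 \<in> E" using assms(2) kk(2) unfolding is_path_def e2_def by simp
  have "e1 \<noteq> e2"
  proof
    assume "e1 = e2"
    moreover have "q ! (k-1) \<in> e1" unfolding e1_def by simp
    ultimately have "q ! (k-1) \<in> e2" by simp
    then have "q ! (k-1) = q ! k \<or> q ! (k-1) = q ! Suc k" unfolding e2_def by blast
    moreover have "q ! (k-1) \<noteq> q ! k" using nth_eq_iff_index_eq[OF q(2), of "k-1" k] kk by simp
    moreover have "q ! (k-1) \<noteq> q ! Suc k" using nth_eq_iff_index_eq[OF q(2), of "k-1" "Suc k"] kk by simp
    ultimately show False by blast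
  qed
  have "card {e \<in> E. u \<in> e} = 1" using assms(1) unfolding is_leaf_def by simp
  then obtain e' where S: "{e \<in> E. u \<in> e} = {e'}" by (rule card_1_singletonE)
  have "e1 \<in> {e \<in> E. u \<in> e}" using \<open>e1 \<in> E\<close> k(2) unfolding e1_def by simp
  have "e2 \<in> {e \<in> E. u \<in> e}" using \<open>e2 \<in> E\<close> k(2) unfolding e2_def by simp
  then have "e2 \<in> {e'}" unfolding S .
  moreover have "e1 \<in> {e'}" using \<open>e1 \<in> {e \<in> E. u \<in> e}\<close> unfolding S .
  ultimately have "e1 = e2" by simp
  with \<open>e1 \<noteq> e2\<close> show False by simp
qed


lemma tree_facts:
  assumes "is_tree V E"
  shows "finite V" "finite E" "\<forall>e\<in>E. card e = 2" "\<forall>e\<in>E. e \<subseteq> V" "acyclic_graph E"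
    "\<Union>E \<subseteq> V" "graph_connected V E"
proof -
  have sub: "E \<subseteq> {{u, v} | u v. u \<in> V \<and> v \<in> V \<and> u \<noteq> v}" and fV: "finite V"
    using assms unfolding is_tree_def by auto
  show "finite V" by fact
  have c: "card e = 2 \<and> e \<subseteq> V" if "e \<in> E" for e
  proof -
    obtain u v where "e = {u,v}" "u \<in> V" "v \<in> V" "u \<noteq> v" using sub \<open>e \<in> E\<close> by blast
    then show ?thesis by simp
  qed
  show ev: "\<forall>e\<in>E. e \<subseteq> V" using c by blast
  have "E \<subseteq> Pow V" using c by blast
  moreover have "finite (Pow V)" using fV by simp
  ultimately show "finite E" by (rule finite_subset)
  show "\<forall>e\<in>E. card e = 2" using c by blast
  show "acyclic_graph E" "graph_connected V E" using assms unfolding is_tree_def by auto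
  show "\<Union>E \<subseteq> V" using ev by blast
qed

lemma card_sng: "card ((\<lambda>w. {w}) ` S) = card S"
  by (simp add: card_image)

lemma sng_psubset: "(\<lambda>w. {w}) ` A \<subset> (\<lambda>w. {w}) ` B \<longleftrightarrow> A \<subset> B"
  by (auto simp: inj_image_subset_iff inj_def psubset_eq)

lemma finite_path_edges: "finite (path_edges p)"
proof -
  have "path_edges p \<subseteq> (\<lambda>i. {p!i, p!Suc i}) ` {..<length p}" unfolding path_edges_def by auto
  then show ?thesis by (rule finite_subset) simp
qed

lemma loops_PM: "distinct p \<Longrightarrow> loops_of (path_edges p \<union> (\<lambda>w. {w}) ` S) = (\<lambda>w. {w}) ` S"
  unfolding loops_of_def using path_edges_card2[of p] by force

lemma path_in_V: "is_tree V E \<Longrightarrow> is_path E p \<Longrightarrow> length p \<ge> 2 \<Longrightarrow> set p \<subseteq> V"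
  using path_set_sub tree_facts(6) by blast

lemma PM_matching:
  assumes T: "is_tree V E" and p: "is_path E p" "set p \<subseteq> V"
  shows "two_matching V E (path_edges p \<union> (\<lambda>w. {w}) ` (V - set p))
       \<and> card (path_edges p \<union> (\<lambda>w. {w}) ` (V - set p)) = card V - 1"
proof -
  let ?M = "path_edges p \<union> (\<lambda>w. {w}) ` (V - set p)"
  have dp: "distinct p" "p \<noteq> []" using p unfolding is_path_def by auto
  have fV: "finite V" using tree_facts[OF T] by blast
  have c2: "\<forall>e\<in>path_edges p. card e = 2" using path_edges_card2[OF dp(1)] by blast
  have disj: "path_edges p \<inter> (\<lambda>w. {w}) ` (V - set p) = {}" using c2 by force
  have fpe: "finite (path_edges p)" by (rule finite_path_edges)
  have "card ?M = card (path_edges p) + card ((\<lambda>w. {w}) ` (V - set p))"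
    using disj fpe fV by (simp add: card_Un_disjoint)
  also have "\<dots> = (length p - 1) + (card V - length p)"
    using card_path_edges[OF dp(1)] card_Diff_subset[OF _ p(2)] distinct_card[OF dp(1)] by (simp add: card_sng)
  also have "\<dots> = card V - 1"
  proof -
    have "length p \<le> card V" using card_mono[OF fV p(2)] distinct_card[OF dp(1)] by simp
    moreover have "length p \<ge> 1" using dp by (cases p) auto
    ultimately show ?thesis by linarith
  qed
  finally have card: "card ?M = card V - 1" .
  have sub: "?M \<subseteq> loop_edges V E" using path_edges_sub[OF p(1)] unfolding loop_edges_def by blast
  have deg: "mdeg ?M w \<le> 2" if w: "w \<in> V" for w
  proof -
    have S: "{e \<in> ?M. w \<in> e \<and> card e = 2} = {e \<in> path_edges p. w \<in> e}" using c2 by auto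
    have L: "{w} \<in> ?M \<longleftrightarrow> w \<notin> set p" using c2 w by force
    show ?thesis
    proof (cases "w \<in> set p")
      case False
      then have "{e \<in> path_edges p. w \<in> e} = {}" using path_edges_mem[OF dp(1)] by fastforce
      then have "card {e \<in> path_edges p. w \<in> e} = 0" by (simp only: card.empty)
      then show ?thesis unfolding mdeg_def S using L False by simp
    next
      case True
      then obtain k where k: "k < length p" "w = p ! k" by (auto simp: in_set_conv_nth)
      have "{e \<in> path_edges p. w \<in> e} \<subseteq> {{p ! (k-1), p ! k}, {p ! k, p ! Suc k}}"
      proof
        fix e assume "e \<in> {e \<in> path_edges p. w \<in> e}"
        then obtain i where i: "Suc i < length p" "e = {p ! i, p ! Suc i}" "w \<in> e"
          unfolding path_edges_def by auto
        then have "p ! i = p ! k \<or> p ! Suc i = p ! k" using k by auto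
        then have "i = k \<or> Suc i = k" using i k nth_eq_iff_index_eq[OF dp(1)] by auto
        then show "e \<in> {{p ! (k-1), p ! k}, {p ! k, p ! Suc k}}" using i by auto
      qed
      moreover have "card {{p ! (k-1), p ! k}, {p ! k, p ! Suc k}} \<le> 2"
        by (cases "{p ! (k-1), p ! k} = {p ! k, p ! Suc k}") auto
      ultimately have "card {e \<in> path_edges p. w \<in> e} \<le> 2"
        by (meson card_mono finite.emptyI finite.insertI le_trans)
      then show ?thesis unfolding mdeg_def using S L True by simp
    qed
  qed
  show ?thesis using sub deg card unfolding two_matching_def by blast
qed


lemma pe_idx: "Suc i < length q \<Longrightarrow> {q ! i, q ! Suc i} \<in> path_edges q"
  unfolding path_edges_def by blast

lemma tm_structure:
  assumes T: "is_tree V E" and M: "two_matching V E M" "card M = card V - 1" and n2: "card V \<ge> 2"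
  shows "M \<subseteq> (\<lambda>w. {w}) ` V \<or>
    (\<exists>q. is_path E q \<and> length q \<ge> 2 \<and> M = path_edges q \<union> (\<lambda>w. {w}) ` (V - set q))"
proof -
  note tf = tree_facts[OF T]
  define F where "F = M \<inter> E"
  define LV where "LV = {w \<in> V. {w} \<in> M}"
  have Msub: "M \<subseteq> E \<union> (\<lambda>w. {w}) ` V" using M(1) unfolding two_matching_def loop_edges_def by blast
  have fM: "finite M"
  proof (rule finite_subset[OF Msub])
    show "finite (E \<union> (\<lambda>w. {w}) ` V)" using tf by simp
  qed
  have Mdec: "M = F \<union> (\<lambda>w. {w}) ` LV" using Msub unfolding F_def LV_def by blast
  have c2F: "\<forall>e\<in>F. card e = 2" using tf(3) unfolding F_def by blast
  have disj: "F \<inter> (\<lambda>w. {w}) ` LV = {}" using c2F by force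
  have fF: "finite F" using fM unfolding F_def by simp
  have fLV: "finite LV" using tf(1) unfolding LV_def by simp
  have cardM: "card M = card F + card LV"
    using Mdec disj fF fLV by (simp add: card_Un_disjoint card_sng)
  have deg: "\<And>w. w \<in> V \<Longrightarrow> mdeg M w \<le> 2" using M(1) unfolding two_matching_def by blast
  show ?thesis
  proof (cases "F = {}")
    case True
    then show ?thesis using Mdec unfolding LV_def by blast
  next
    case Fne: False
    have FE: "F \<subseteq> E" unfolding F_def by blast
    have acF: "acyclic_graph F" using acyclic_mono[OF tf(5) FE] .
    obtain e where e: "e \<in> F" using Fne by blast
    obtain a b where ab: "e = {a,b}" "a \<noteq> b" using c2F e by (meson card_2_iff)
    have "is_path F [a,b]" using ab e unfolding is_path_def by (auto simp: less_Suc_eq)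
    moreover have finU: "finite (\<Union>F)" using finite_Union_card2[OF fF c2F] .
    ultimately obtain q where q: "is_path F q" "length q \<ge> 2"
       "\<forall>q'. is_path F q' \<and> length q' \<ge> 2 \<longrightarrow> length q' \<le> length q"
      using longest_path_exists[of F "[a,b]"] by auto
    have qE: "is_path E q" using is_path_mono[OF q(1) FE] .
    have dq: "distinct q" using q(1) unfolding is_path_def by simp
    have UFV: "\<Union>F \<subseteq> V" using tf(6) FE by blast
    have setq: "set q \<subseteq> \<Union>F" using path_set_sub[OF q(1,2)] .
    have key: "e \<in> path_edges q" if e: "e \<in> F" and w: "w \<in> set q" "w \<in> e" for e w
    proof -
      obtain k where k: "k < length q" "w = q ! k" using w by (auto simp: in_set_conv_nth)
      consider "k = 0" | "k = length q - 1" | "0 < k \<and> Suc k < length q" using k by linarith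
      then show ?thesis
      proof cases
        case 1
        then have "hd q \<in> e" using w k q(2) by (cases q) auto
        then have "e = {q!0, q!1}" using longest_end[OF acF c2F q e] by simp
        then show ?thesis using pe_idx[of 0 q] q(2) by simp
      next
        case 2
        have rq: "is_path F (rev q)" "length (rev q) \<ge> 2"
          "\<forall>q'. is_path F q' \<and> length q' \<ge> 2 \<longrightarrow> length q' \<le> length (rev q)"
          using q is_path_rev by auto
        have "q \<noteq> []" using q(2) by auto
        then have "last q = q ! k" using 2 last_conv_nth[of q] by simp
        then have "hd (rev q) \<in> e" using w k q(2) by (simp add: hd_rev)
        then have "e = {rev q!0, rev q!1}" using longest_end[OF acF c2F rq e] by simp
        then have "e \<in> path_edges (rev q)" using pe_idx[of 0 "rev q"] rq(2) by simp
        then show ?thesis by (simp add: path_edges_rev)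
      next
        case 3
        have k3: "0 < k" "Suc k < length q" "k - 1 < length q" using 3 by auto
        define e1 where "e1 = {q ! (k-1), q ! k}"
        define e2 where "e2 = {q ! k, q ! Suc k}"
        have "Suc (k-1) < length q" "Suc (k-1) = k" using 3 by auto
        then have e1P: "e1 \<in> path_edges q" using pe_idx[of "k-1" q] unfolding e1_def by simp
        have e2P: "e2 \<in> path_edges q" using pe_idx[of k q] 3 unfolding e2_def by simp
        show ?thesis
        proof (rule ccontr)
          assume nP: "e \<notin> path_edges q"
          have pF: "path_edges q \<subseteq> F" using path_edges_sub[OF q(1)] .
          have ne12: "e1 \<noteq> e2"
          proof
            assume "e1 = e2"
            moreover have "q ! (k-1) \<in> e1" unfolding e1_def by simp
            ultimately have "q ! (k-1) \<in> e2" by simp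
            then have "q ! (k-1) = q ! k \<or> q ! (k-1) = q ! Suc k" unfolding e2_def by blast
            moreover have "q ! (k-1) \<noteq> q ! k" using nth_eq_iff_index_eq[OF dq, of "k-1" k] k3 by simp
            moreover have "q ! (k-1) \<noteq> q ! Suc k" using nth_eq_iff_index_eq[OF dq, of "k-1" "Suc k"] k3 by simp
            ultimately show False by blast
          qed
          have "e \<noteq> e1" "e \<noteq> e2" using nP e1P e2P by auto
          then have c3: "card {e1, e2, e} = 3" using ne12 by simp
          have "{e1, e2, e} \<subseteq> {e' \<in> M. w \<in> e' \<and> card e' = 2}"
            using e1P e2P pF e w(2) c2F k unfolding F_def e1_def e2_def by auto
          then have "card {e1, e2, e} \<le> card {e' \<in> M. w \<in> e' \<and> card e' = 2}"
            by (rule card_mono[rotated]) (use fM in simp)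
          also have "\<dots> \<le> mdeg M w" unfolding mdeg_def by simp
          also have "\<dots> \<le> 2" using deg w setq UFV by blast
          finally show False using c3 by simp
        qed
      qed
    qed
    define G where "G = F - path_edges q"
    have pF: "path_edges q \<subseteq> F" using path_edges_sub[OF q(1)] .
    have Gdisj: "\<Union>G \<inter> set q = {}" using key unfolding G_def by blast
    have LVdisj: "LV \<inter> \<Union>F = {}"
    proof (rule ccontr)
      assume "LV \<inter> \<Union>F \<noteq> {}"
      then obtain w e where w: "w \<in> LV" "e \<in> F" "w \<in> e" by blast
      have "e \<in> {e' \<in> M. w \<in> e' \<and> card e' = 2}" using w c2F unfolding F_def by auto
      then have "card {e' \<in> M. w \<in> e' \<and> card e' = 2} \<ge> 1"
        using fM by (metis (no_types, lifting) One_nat_def Suc_leI card_gt_0_iff empty_iff finite_subset mem_Collect_eq subsetI)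
      then have "mdeg M w \<ge> 3" using w(1) unfolding mdeg_def LV_def by simp
      moreover have "w \<in> V" using w(1) unfolding LV_def by simp
      ultimately show False using deg by fastforce
    qed
    have FG: "F = path_edges q \<union> G" using pF unfolding G_def by blast
    have fG: "finite G" using fF unfolding G_def by simp
    have cG: "card G = card F - card (path_edges q)" unfolding G_def
      using card_Diff_subset[OF finite_path_edges pF] .
    have "card (path_edges q) \<le> card F" using card_mono[OF fF pF] .
    then have cardF: "card F = (length q - 1) + card G"
      using cG card_path_edges[OF dq] by linarith
    have finUG: "finite (\<Union>G)" using finU unfolding G_def by (meson Diff_subset Union_mono finite_subset)
    have bound: "card (\<Union>G) + length q + card LV \<le> card V"
    proof -
      have sub: "\<Union>G \<union> set q \<union> LV \<subseteq> V" using UFV setq unfolding G_def LV_def by blast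
      have "card (\<Union>G \<union> set q \<union> LV) = card (\<Union>G) + card (set q) + card LV"
      proof -
        have d1: "(\<Union>G \<union> set q) \<inter> LV = {}" using LVdisj setq unfolding G_def by blast
        have "card (\<Union>G \<union> set q) = card (\<Union>G) + card (set q)"
          using Gdisj finUG by (simp add: card_Un_disjoint)
        then show ?thesis using d1 finUG fLV by (simp add: card_Un_disjoint)
      qed
      then show ?thesis using card_mono[OF tf(1) sub] distinct_card[OF dq] by simp
    qed
    have G0: "G = {}"
    proof (rule ccontr)
      assume "G \<noteq> {}"
      moreover have "\<forall>e\<in>G. card e = 2" using c2F unfolding G_def by blast
      moreover have "acyclic_graph G" using acyclic_mono[OF acF] unfolding G_def by blast
      ultimately have "card G + 1 \<le> card (\<Union>G)" using forest_bound fG by blast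
      then show False using bound cardF cardM M(2) n2 q(2) by linarith
    qed
    have FP: "F = path_edges q" using FG G0 by simp
    have cLV: "card LV = card V - length q" using cardM M(2) cardF G0 q(2) by simp
    have LVsub: "LV \<subseteq> V - set q" using LVdisj setq unfolding LV_def by blast
    have "card (V - set q) = card V - length q"
      using card_Diff_subset[OF _ ] setq UFV distinct_card[OF dq]
      by (metis List.finite_set card_Diff_subset dual_order.trans)
    then have "LV = V - set q" using card_subset_eq[OF _ LVsub] cLV tf(1) by simp
    then show ?thesis using Mdec FP qE q(2) by blast
  qed
qed


lemma end_leaf:
  assumes T: "is_tree V E" and p: "is_path E q" "length q \<ge> 2"
    and nomin: "\<not> (\<exists>M'. two_matching V E M' \<and> card M' = card V - 1 \<and> loops_of M' \<subset> (\<lambda>w. {w}) ` (V - set q))"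
  shows "is_leaf V E (hd q)"
proof -
  note tf = tree_facts[OF T]
  have sV: "set q \<subseteq> V" using path_in_V[OF T p] .
  have hd0: "hd q = q ! 0" using p(2) by (cases q) auto
  have hV: "hd q \<in> V" using sV p(2) hd0 by (cases q) auto
  define e0 where "e0 = {q!0, q!1}"
  have e0E: "e0 \<in> E" using p unfolding is_path_def e0_def by auto
  have all: "e = e0" if e: "e \<in> E" "hd q \<in> e" for e
  proof -
    obtain a b where ab: "e = {a,b}" "a \<noteq> b" using tf(3) e(1) by (meson card_2_iff)
    obtain x where x: "e = {hd q, x}" "x \<noteq> hd q" using ab e(2) by auto
    have xV: "x \<in> V" using tf(4) e(1) x by blast
    show ?thesis
    proof (cases "x \<in> set q")
      case True
      then obtain j where j: "j < length q" "x = q ! j" by (auto simp: in_set_conv_nth)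
      have "j \<noteq> 0" using j x hd0 by (cases j) auto
      moreover have "\<not> 2 \<le> j" using chord[OF tf(5) p(1), of j] j x e(1) by auto
      ultimately have "j = 1" by auto
      then show ?thesis using x j hd0 e0_def by simp
    next
      case False
      have qn: "q \<noteq> []" using p(2) by auto
      have P: "is_path E (x # q)" using is_path_Cons[OF qn, of E x] False p(1) e(1) x
        by (auto simp: insert_commute)
      have sV': "set (x # q) \<subseteq> V" using sV xV by simp
      have dq: "distinct (x # q)" using P unfolding is_path_def by simp
      let ?M = "path_edges (x # q) \<union> (\<lambda>w. {w}) ` (V - set (x # q))"
      have "two_matching V E ?M \<and> card ?M = card V - 1" using PM_matching[OF T P sV'] .
      moreover have "loops_of ?M = (\<lambda>w. {w}) ` (V - set (x # q))" using loops_PM[OF dq] .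
      moreover have "V - set (x # q) \<subset> V - set q" using xV False by auto
      ultimately have "two_matching V E ?M \<and> card ?M = card V - 1 \<and> loops_of ?M \<subset> (\<lambda>w. {w}) ` (V - set q)"
        by (simp only: sng_psubset)
      then show ?thesis using nomin by blast
    qed
  qed
  have he0: "hd q \<in> e0" using hd0 unfolding e0_def by simp
  have "{e \<in> E. hd q \<in> e} = {e0}"
  proof (rule set_eqI)
    fix e show "e \<in> {e \<in> E. hd q \<in> e} \<longleftrightarrow> e \<in> {e0}" using all e0E he0 by blast
  qed
  then show ?thesis unfolding is_leaf_def using hV by simp
qed

lemma loops_all_sng: "M \<subseteq> (\<lambda>w. {w}) ` V \<Longrightarrow> loops_of M = M"
  unfolding loops_of_def by auto

lemma fwd:
  assumes T: "is_tree V E" and n: "card V = n" "n \<ge> 2"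
    and M: "M \<in> min_two_matchings V E (n - 1)"
  shows "\<exists>p u v. M = path_edges p \<union> (\<lambda>w. {w}) ` (V - set p) \<and>
       is_leaf V E u \<and> is_leaf V E v \<and> u \<noteq> v \<and> is_path E p \<and> hd p = u \<and> last p = v"
proof -
  note tf = tree_facts[OF T]
  have tm: "two_matching V E M" and cM: "card M = n - 1"
    and nomin: "\<not> (\<exists>M'. two_matching V E M' \<and> card M' = card M \<and> loops_of M' \<subset> loops_of M)"
    using M unfolding min_two_matchings_def by auto
  have cM': "card M = card V - 1" using cM n by simp
  consider (L) "M \<subseteq> (\<lambda>w. {w}) ` V"
    | (P) q where "is_path E q" "length q \<ge> 2" "M = path_edges q \<union> (\<lambda>w. {w}) ` (V - set q)"
    using tm_structure[OF T tm cM'] n by blast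
  then show ?thesis
  proof cases
    case L
    define LV where "LV = {w \<in> V. {w} \<in> M}"
    have MLV: "M = (\<lambda>w. {w}) ` LV" using L unfolding LV_def by blast
    have lM: "loops_of M = M" using loops_all_sng[OF L] .
    have cLV: "card LV = n - 1" using cM MLV by (simp add: card_sng)
    have LVV: "LV \<subseteq> V" unfolding LV_def by blast
    obtain w where w: "w \<in> V" "w \<notin> LV"
    proof -
      have "\<not> V \<subseteq> LV"
      proof
        assume "V \<subseteq> LV"
        then have "card V \<le> card LV" using card_mono tf(1) LVV by (metis finite_subset)
        then show False using cLV n by simp
      qed
      then show ?thesis using that by blast
    qed
    have LVeq: "LV = V - {w}"
    proof -
      have "LV \<subseteq> V - {w}" using LVV w by blast
      moreover have "card (V - {w}) = n - 1" using w n by simp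
      ultimately show ?thesis using card_subset_eq[of "V - {w}" LV] tf(1) cLV by simp
    qed
    obtain y where y: "y \<in> V" "y \<noteq> w"
    proof -
      have "card (V - {w}) \<noteq> 0" using LVeq cLV n by simp
      then have "V - {w} \<noteq> {}" by (rule contrapos_nn) (simp only: card.empty)
      then show ?thesis using that by blast
    qed
    obtain r where r: "is_path E r" "hd r = w" "last r = y"
      using tf(7) w(1) y(1) unfolding graph_connected_def by blast
    obtain r' where r': "r = w # r'" using r unfolding is_path_def by (cases r) auto
    have r'n: "r' \<noteq> []" using r r' y by auto
    define x where "x = hd r'"
    have wx: "{w, x} \<in> E" using is_path_Cons[OF r'n, of E w] r r' x_def by simp
    have xw: "x \<noteq> w" using is_path_Cons[OF r'n, of E w] r r' x_def r'n by (cases r') auto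
    have xV: "x \<in> V" using tf(4) wx by blast
    have P: "is_path E [w, x]" using is_path_Cons[of "[x]" E w] wx xw by (simp add: is_path_def)
    let ?M = "path_edges [w,x] \<union> (\<lambda>u. {u}) ` (V - set [w,x])"
    have A: "two_matching V E ?M \<and> card ?M = card V - 1"
      using PM_matching[OF T P] w xV by simp
    have B: "loops_of ?M = (\<lambda>u. {u}) ` (V - set [w,x])" using loops_PM[of "[w,x]"] xw by simp
    have C: "V - set [w,x] \<subset> LV" using LVeq xV xw by auto
    have D: "loops_of M = (\<lambda>u. {u}) ` LV" using lM MLV by simp
    have "loops_of ?M \<subset> loops_of M" unfolding B D sng_psubset by (rule C)
    then have "two_matching V E ?M \<and> card ?M = card M \<and> loops_of ?M \<subset> loops_of M"
      using A cM' by simp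
    then show ?thesis using nomin by blast
  next
    case P
    have dq: "distinct q" using P unfolding is_path_def by simp
    have lM: "loops_of M = (\<lambda>w. {w}) ` (V - set q)" using P(3) loops_PM[OF dq] by simp
    have nm: "\<not> (\<exists>M'. two_matching V E M' \<and> card M' = card V - 1 \<and> loops_of M' \<subset> (\<lambda>w. {w}) ` (V - set q))"
      using nomin cM' lM by simp
    have l1: "is_leaf V E (hd q)" using end_leaf[OF T P(1,2) nm] .
    have nm': "\<not> (\<exists>M'. two_matching V E M' \<and> card M' = card V - 1 \<and> loops_of M' \<subset> (\<lambda>w. {w}) ` (V - set (rev q)))"
      using nm by simp
    have l2: "is_leaf V E (hd (rev q))" using end_leaf[OF T is_path_rev[OF P(1)] _ nm'] P(2) by simp
    have qn: "q \<noteq> []" using P(2) by auto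
    have ne: "hd q \<noteq> last q" using distinct_hd_last[OF dq qn] P(2) by auto
    show ?thesis using P l1 l2 ne by (auto simp: hd_rev)
  qed
qed

lemma bwd:
  assumes T: "is_tree V E" and n: "card V = n" "n \<ge> 2"
    and uv: "is_leaf V E u" "is_leaf V E v" "u \<noteq> v" and p: "is_path E p" "hd p = u" "last p = v"
  shows "path_edges p \<union> (\<lambda>w. {w}) ` (V - set p) \<in> min_two_matchings V E (n - 1)"
proof -
  note tf = tree_facts[OF T]
  let ?M = "path_edges p \<union> (\<lambda>w. {w}) ` (V - set p)"
  have dp: "distinct p" "p \<noteq> []" using p unfolding is_path_def by auto
  have lp: "length p \<ge> 2"
  proof (rule ccontr)
    assume "\<not> length p \<ge> 2"
    then have "length p = 1" using dp(2) length_greater_0_conv[of p] by linarith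
    then obtain a where "p = [a]" by (cases p) auto
    then show False using p uv by simp
  qed
  have sV: "set p \<subseteq> V" using path_in_V[OF T p(1) lp] .
  have PM: "two_matching V E ?M \<and> card ?M = card V - 1" using PM_matching[OF T p(1) sV] .
  have lM: "loops_of ?M = (\<lambda>w. {w}) ` (V - set p)" using loops_PM[OF dp(1)] .
  have cVp: "card (V - set p) = card V - length p"
    using card_Diff_subset[OF _ sV] distinct_card[OF dp(1)] by simp
  have nomin: False if M': "two_matching V E M'" "card M' = card ?M" "loops_of M' \<subset> loops_of ?M" for M'
  proof -
    have cM': "card M' = card V - 1" using M'(2) PM by simp
    consider (L) "M' \<subseteq> (\<lambda>w. {w}) ` V"
      | (P) q where "is_path E q" "length q \<ge> 2" "M' = path_edges q \<union> (\<lambda>w. {w}) ` (V - set q)"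
      using tm_structure[OF T M'(1) cM'] n by blast
    then show False
    proof cases
      case L
      have "M' \<subseteq> (\<lambda>w. {w}) ` (V - set p)" using M'(3) loops_all_sng[OF L] lM by auto
      then have "card M' \<le> card (V - set p)"
        using card_mono[of "(\<lambda>w. {w}) ` (V - set p)" M'] tf(1) by (simp add: card_sng)
      then show False using cM' cVp lp n by linarith
    next
      case P
      have dq: "distinct q" using P unfolding is_path_def by simp
      have "loops_of M' = (\<lambda>w. {w}) ` (V - set q)" using P(3) loops_PM[OF dq] by simp
      then have ps: "V - set q \<subset> V - set p" using M'(3) lM sng_psubset by metis
      have sq: "set q \<subseteq> V" using path_in_V[OF T P(1,2)] .
      have pq: "set p \<subseteq> set q" using ps sV by blast
      have pq': "set p \<noteq> set q" using ps by blast
      have "u \<in> set q" "v \<in> set q" using pq p dp by auto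
      then have "u = hd q \<or> u = last q" "v = hd q \<or> v = last q" using leaf_end[OF uv(1) P(1)] leaf_end[OF uv(2) P(1)] by auto
      then have "(hd q = u \<and> last q = v) \<or> (hd q = v \<and> last q = u)" using uv(3) by auto
      then show False
      proof
        assume "hd q = u \<and> last q = v"
        then have "p = q" using path_unique[OF tf(5) p(1) P(1)] p by simp
        then show False using pq' by simp
      next
        assume h: "hd q = v \<and> last q = u"
        have qn: "q \<noteq> []" using P(2) by auto
        have "hd (rev q) = u" "last (rev q) = v" using h qn by (auto simp: hd_rev last_rev)
        then have "p = rev q" using path_unique[OF tf(5) p(1) is_path_rev[OF P(1)]] p by simp
        then show False using pq' by simp
      qed
    qed
  qed
  show ?thesis unfolding min_two_matchings_def using PM n nomin by auto
qed


theorem proposition4p9: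
  fixes V :: "'a set" and E :: "'a set set" and n :: nat
  assumes "is_tree V E" and "card V = n" and "n \<ge> 2"
  shows "min_two_matchings V E (n - 1) =
    {path_edges p \<union> (\<lambda>w. {w}) ` (V - set p) | p u v.
       is_leaf V E u \<and> is_leaf V E v \<and> u \<noteq> v \<and>
       is_path E p \<and> hd p = u \<and> last p = v}"
proof (rule set_eqI)
  fix M
  show "M \<in> min_two_matchings V E (n - 1) \<longleftrightarrow> M \<in> {path_edges p \<union> (\<lambda>w. {w}) ` (V - set p) | p u v.
       is_leaf V E u \<and> is_leaf V E v \<and> u \<noteq> v \<and>
       is_path E p \<and> hd p = u \<and> last p = v}"
  proof
    assume "M \<in> min_two_matchings V E (n - 1)"
    then obtain p u v where "M = path_edges p \<union> (\<lambda>w. {w}) ` (V - set p)"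
      "is_leaf V E u" "is_leaf V E v" "u \<noteq> v" "is_path E p" "hd p = u" "last p = v"
      using fwd[OF assms] by blast
    then show "M \<in> {path_edges p \<union> (\<lambda>w. {w}) ` (V - set p) | p u v.
       is_leaf V E u \<and> is_leaf V E v \<and> u \<noteq> v \<and>
       is_path E p \<and> hd p = u \<and> last p = v}" by blast
  next
    assume "M \<in> {path_edges p \<union> (\<lambda>w. {w}) ` (V - set p) | p u v.
       is_leaf V E u \<and> is_leaf V E v \<and> u \<noteq> v \<and>
       is_path E p \<and> hd p = u \<and> last p = v}"
    then obtain p u v where "M = path_edges p \<union> (\<lambda>w. {w}) ` (V - set p)"
      "is_leaf V E u" "is_leaf V E v" "u \<noteq> v" "is_path E p" "hd p = u" "last p = v"
      by blast
    then show "M \<in> min_two_matchings V E (n - 1)" using bwd[OF assms] by simp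
  qed
qed

end
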